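(* Let $\mathbf{A}\in\mathbb{R}^{n\times n}$ be a nonzero symmetric positive-semidefinite matrix (no spectral gap is assumed). Run the power method with starting vector $\boldsymbol{\omega}\sim\mathrm{normal}(\mathbf{0},\mathbf{I}_n)$. Then \[ \mathbb{E}\,\mathrm{err}(\xi_t) \le \frac{1+\log\sqrt{2n}+\log t}{t}\quad\text{for } t = 1,2,3,\dots. \] In particular, for any $\varepsilon\in(0,1)$, if $t \ge (1+\log\sqrt{2n}+\log t)/\varepsilon$ then $\mathbb{E}\,\mathrm{err}(\xi_t)\le\varepsilon$.
   Context: Power method: given a starting vector $\boldsymbol{\omega}\in\mathbb{R}^n$, set $\mathbf{x}_0 := \boldsymbol{\omega}$ and for $t = 0,1,2,\dots$ set $\mathbf{q}_t := \mathbf{x}_t/\|\mathbf{x}_t\|_2$, $\mathbf{x}_{t+1} := \mathbf{A}\mathbf{q}_t$, and $\xi_t := \mathbf{q}_t^*(\mathbf{A}\mathbf{q}_t)$ (well defined almost surely). The relative error is $\mathrm{err}(\xi_t) := (\lambda_1 - \xi_t)/\lambda_1$, where $\lambda_1$ is the largest eigenvalue of $\mathbf{A}$. Logarithms are natural. *)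

theory Defs
  imports "HOL-Probability.Probability"
begin

definition std_gaussian_vec :: "(real^'n) measure" where
  "std_gaussian_vec = density lborel (\<lambda>x. ennreal (\<Prod>i\<in>UNIV. std_normal_density (x $ i)))"

primrec pm_x :: "real^'n^'n \<Rightarrow> real^'n \<Rightarrow> nat \<Rightarrow> real^'n" where
  "pm_x A w 0 = w"
| "pm_x A w (Suc t) = A *v ((1 / norm (pm_x A w t)) *\<^sub>R pm_x A w t)"

definition pm_q :: "real^'n^'n \<Rightarrow> real^'n \<Rightarrow> nat \<Rightarrow> real^'n" where
  "pm_q A w t = (1 / norm (pm_x A w t)) *\<^sub>R pm_x A w t"

definition pm_xi :: "real^'n^'n \<Rightarrow> real^'n \<Rightarrow> nat \<Rightarrow> real" where
  "pm_xi A w t = pm_q A w t \<bullet> (A *v pm_q A w t)"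

definition lambda_max :: "real^'n^'n \<Rightarrow> real" where
  "lambda_max A = Max {l. \<exists>v. v \<noteq> 0 \<and> A *v v = l *\<^sub>R v}"

definition pm_err :: "real^'n^'n \<Rightarrow> real^'n \<Rightarrow> nat \<Rightarrow> real" where
  "pm_err A w t = (lambda_max A - pm_xi A w t) / lambda_max A"

end

theory Submission
  imports Defs
begin


lemma det_shear_matrix:
  fixes m n :: "'n::finite"
  assumes "m \<noteq> n"
  shows "det (matrix (\<lambda>v::real^'n. \<chi> i. if i = m then v $ m + v $ n else v $ i)) = 1"
proof -
  have "matrix (\<lambda>v::real^'n. \<chi> i. if i = m then v $ m + v $ n else v $ i)
      = (\<chi> k. if k = m then row m (mat 1) + 1 *s row n (mat 1) else row k (mat 1))"
    by (auto simp: matrix_def vec_eq_iff row_def mat_def axis_def)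
  thus ?thesis using det_row_operation[OF assms, of "mat 1 :: real^'n^'n" 1] by simp
qed

proposition
 fixes f :: "real^'n::finite \<Rightarrow> real^'n::_"
  assumes "linear f" "S \<in> lmeasurable"
  shows measurable_linear_image': "(f ` S) \<in> lmeasurable"
    and measure_linear_image': "measure lebesgue (f ` S) = \<bar>det (matrix f)\<bar> * measure lebesgue S" (is "?Q f S")
proof -
  have "\<forall>S \<in> lmeasurable. (f ` S) \<in> lmeasurable \<and> ?Q f S"
  proof (rule induct_linear_elementary [OF \<open>linear f\<close>]; intro ballI)
    fix f g and S :: "(real,'n) vec set"
    assume "linear f" and "linear g"
      and f [rule_format]: "\<forall>S \<in> lmeasurable. f ` S \<in> lmeasurable \<and> ?Q f S"
      and g [rule_format]: "\<forall>S \<in> lmeasurable. g ` S \<in> lmeasurable \<and> ?Q g S"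
      and S: "S \<in> lmeasurable"
    then have gS: "g ` S \<in> lmeasurable"
      by blast
    show "(f \<circ> g) ` S \<in> lmeasurable \<and> ?Q (f \<circ> g) S"
      using f [OF gS] g [OF S] matrix_compose [OF \<open>linear g\<close> \<open>linear f\<close>]
      by (simp add: o_def image_comp abs_mult det_mul)
  next
    fix f :: "real^'n::_ \<Rightarrow> real^'n::_" and i and S :: "(real^'n::_) set"
    assume "linear f" and 0: "\<And>x. f x $ i = 0" and "S \<in> lmeasurable"
    then have "\<not> inj f"
      by (metis (full_types) linear_injective_imp_surjective one_neq_zero surjE vec_component)
    have detf: "det (matrix f) = 0"
      using \<open>\<not> inj f\<close> det_nz_iff_inj[OF \<open>linear f\<close>] by blast
    show "f ` S \<in> lmeasurable \<and> ?Q f S"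
    proof
      show "f ` S \<in> lmeasurable"
        using lmeasurable_iff_indicator_has_integral \<open>linear f\<close> \<open>\<not> inj f\<close> negligible_UNIV negligible_linear_singular_image by blast
      have "measure lebesgue (f ` S) = 0"
        by (meson \<open>\<not> inj f\<close> \<open>linear f\<close> negligible_imp_measure0 negligible_linear_singular_image)
      also have "\<dots> = \<bar>det (matrix f)\<bar> * measure lebesgue S"
        by (simp add: detf)
      finally show "?Q f S" .
    qed
  next
    fix c and S :: "(real^'n::_) set"
    assume "S \<in> lmeasurable"
    show "(\<lambda>a. \<chi> i. c i * a $ i) ` S \<in> lmeasurable \<and> ?Q (\<lambda>a. \<chi> i. c i * a $ i) S"
    proof
      show "(\<lambda>a. \<chi> i. c i * a $ i) ` S \<in> lmeasurable"
        by (simp add: \<open>S \<in> lmeasurable\<close> measurable_stretch)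
      show "?Q (\<lambda>a. \<chi> i. c i * a $ i) S"
        by (simp add: measure_stretch [OF \<open>S \<in> lmeasurable\<close>, of c] axis_def matrix_def det_diagonal)
    qed
  next
    fix m :: "'n" and n :: "'n" and S :: "(real, 'n) vec set"
    assume "m \<noteq> n" and "S \<in> lmeasurable"
    let ?h = "\<lambda>v::(real, 'n) vec. \<chi> i. v $ Transposition.transpose m n i"
    have lin: "linear ?h"
      by (rule linearI) (simp_all add: plus_vec_def scaleR_vec_def)
    have meq: "measure lebesgue ((\<lambda>v::(real, 'n) vec. \<chi> i. v $ Transposition.transpose m n i) ` cbox a b)
             = measure lebesgue (cbox a b)" for a b
    proof (cases "cbox a b = {}")
      case True then show ?thesis
        by simp
    next
      case False
      then have him: "?h ` (cbox a b) \<noteq> {}"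
        by blast
      have eq: "?h ` (cbox a b) = cbox (?h a) (?h b)"
        by (auto simp: image_iff lambda_swap_Galois mem_box_cart) (metis transpose_involutory)+
      show ?thesis
        using him prod.permute [OF permutes_swap_id, where S=UNIV and g="\<lambda>i. (b - a)$i", symmetric]
        by (simp add: eq content_cbox_cart False)
    qed
    have "(\<chi> i j. if Transposition.transpose m n i = j then 1 else 0) = (\<chi> i j. if j = Transposition.transpose m n i then 1 else (0::real))"
      by (auto intro!: Cart_lambda_cong)
    then have "matrix ?h = transpose(\<chi> i j. mat 1 $ i $ Transposition.transpose m n j)"
      by (auto simp: matrix_eq transpose_def axis_def mat_def matrix_def)
    then have 1: "\<bar>det (matrix ?h)\<bar> = 1"
      by (simp add: det_permute_columns permutes_swap_id sign_swap_id abs_mult)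
    show "?h ` S \<in> lmeasurable \<and> ?Q ?h S"
      using measure_linear_sufficient [OF lin \<open>S \<in> lmeasurable\<close>] meq 1 by force
  next
    fix m n :: "'n" and S :: "(real, 'n) vec set"
    assume "m \<noteq> n" and "S \<in> lmeasurable"
    let ?h = "\<lambda>v::(real, 'n) vec. \<chi> i. if i = m then v $ m + v $ n else v $ i"
    have lin: "linear ?h"
      by (rule linearI) (auto simp: algebra_simps plus_vec_def scaleR_vec_def vec_eq_iff)
    have 1: "det(matrix ?h) = 1" using \<open>m \<noteq> n\<close> by (rule det_shear_matrix)
    have meq: "measure lebesgue (?h ` (cbox a b)) = measure lebesgue (cbox a b)" for a b
    proof (cases "cbox a b = {}")
      case True then show ?thesis by simp
    next
      case False
      then have ne: "(+) (\<chi> i. if i = n then - a $ n else 0) ` cbox a b \<noteq> {}"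
        by auto
      let ?v = "\<chi> i. if i = n then - a $ n else 0"
      have "?h ` cbox a b
            = (+) (\<chi> i. if i = m \<or> i = n then a $ n else 0) ` ?h ` (+) ?v ` (cbox a b)"
        using \<open>m \<noteq> n\<close> unfolding image_comp o_def by (force simp: vec_eq_iff)
      then have "measure lebesgue (?h ` (cbox a b))
               = measure lebesgue ((\<lambda>v. \<chi> i. if i = m then v $ m + v $ n else v $ i) `
                                   (+) ?v ` cbox a b)"
        by (rule ssubst) (rule measure_translation)
      also have "\<dots> = measure lebesgue ((\<lambda>v. \<chi> i. if i = m then v $ m + v $ n else v $ i) ` cbox (?v +a) (?v + b))"
        by (metis (no_types, lifting) cbox_translation)
      also have "\<dots> = measure lebesgue ((+) ?v ` cbox a b)"
        apply (subst measure_shear_interval)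
        using \<open>m \<noteq> n\<close> ne apply auto
        apply (simp add: cbox_translation)
        by (metis cbox_borel cbox_translation measure_completion sets_lborel)
      also have "\<dots> = measure lebesgue (cbox a b)"
        by (rule measure_translation)
        finally show ?thesis .
      qed
    show "?h ` S \<in> lmeasurable \<and> ?Q ?h S"
      using measure_linear_sufficient [OF lin \<open>S \<in> lmeasurable\<close>] meq 1 by force
  qed
  with assms show "(f ` S) \<in> lmeasurable" "?Q f S"
    by metis+
qed


lemma lborel_orthogonal_invariant:
  fixes T :: "real^'n \<Rightarrow> real^'n"
  assumes T: "orthogonal_transformation T"
  shows "distr lborel borel T = lborel"
proof -
  have linT: "linear T" using T orthogonal_transformation_linear by blast
  have [measurable]: "T \<in> borel_measurable borel"
    using linT by (intro borel_measurable_continuous_onI linear_continuous_on linear_conv_bounded_linear[THEN iffD1])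
  have Ti: "orthogonal_transformation (inv T)" using T orthogonal_transformation_inv by blast
  have bijT: "bij T" using T orthogonal_transformation_bij by blast
  show ?thesis
  proof (rule lborel_eqI[symmetric])
    fix l u :: "real^'n" assume le: "\<And>b. b \<in> Basis \<Longrightarrow> l \<bullet> b \<le> u \<bullet> b"
    have pre: "T -` box l u = inv T ` box l u"
      using bijT by (metis bij_vimage_eq_inv_image)
    have bm: "box l u \<in> lmeasurable" by simp
    have im: "inv T ` box l u \<in> lmeasurable"
      using measurable_linear_image'[OF orthogonal_transformation_linear[OF Ti] bm] .
    have opn: "open (T -` box l u)"
      using linT by (intro continuous_open_vimage open_box) (auto intro: linear_continuous_at linear_conv_bounded_linear[THEN iffD1])
    have "emeasure (distr lborel borel T) (box l u) = emeasure lborel (T -` box l u)"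
      by (subst emeasure_distr) auto
    also have "\<dots> = emeasure lebesgue (T -` box l u)"
      using opn by (simp add: emeasure_completion)
    also have "\<dots> = ennreal (measure lebesgue (inv T ` box l u))"
      unfolding pre using im by (simp add: emeasure_eq_measure2)
    also have "measure lebesgue (inv T ` box l u) = measure lebesgue (box l u)"
      using measure_linear_image'[OF orthogonal_transformation_linear[OF Ti] bm] Ti by simp
    also have "ennreal (measure lebesgue (box l u)) = emeasure lebesgue (box l u)"
      using bm by (simp add: emeasure_eq_measure2)
    also have "\<dots> = emeasure lborel (box l u)" by (simp add: emeasure_completion)
    finally show "emeasure (distr lborel borel T) (box l u) = (\<Prod>b\<in>Basis. (u - l) \<bullet> b)"
      using le by (simp add: emeasure_lborel_box)
  qed simp
qed


definition gd :: "real^'n \<Rightarrow> real" where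
  "gd x = (1 / sqrt (2 * pi)) ^ CARD('n) * exp (- ((norm x)^2) / 2)"

lemma gd_nonneg: "0 \<le> gd x" by (simp add: gd_def)

lemma gd_measurable[measurable]: "gd \<in> borel_measurable borel"
  unfolding gd_def by measurable

lemma prod_std_normal_UNIV: "(\<Prod>i\<in>UNIV. std_normal_density ((x::real^'n) $ i)) = gd x"
proof -
  have "(\<Prod>i\<in>UNIV. std_normal_density (x $ i)) = (\<Prod>i\<in>UNIV. (1 / sqrt (2 * pi)) * exp (- ((x$i)^2) / 2))"
    by (simp add: std_normal_density_def)
  also have "\<dots> = (1 / sqrt (2 * pi)) ^ CARD('n) * exp (\<Sum>i\<in>UNIV. - ((x$i)^2) / 2)"
    by (subst prod.distrib) (simp add: exp_sum)
  also have "(\<Sum>i\<in>UNIV. - ((x$i)^2) / 2) = - ((norm x)^2) / 2"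
  proof -
    have "(norm x)^2 = (\<Sum>i\<in>UNIV. (x$i)^2)"
      by (simp add: norm_vec_def L2_set_def sum_nonneg)
    thus ?thesis by (simp add: sum_divide_distrib[symmetric] sum_negf)
  qed
  finally show ?thesis by (simp add: gd_def)
qed

lemma sum_Basis_sq: "(\<Sum>b\<in>Basis. ((x::'a::euclidean_space) \<bullet> b)^2) = (norm x)^2"
proof -
  have "(norm x)^2 = x \<bullet> x" by (rule power2_norm_eq_inner)
  also have "\<dots> = (\<Sum>b\<in>Basis. (x \<bullet> b) * (x \<bullet> b))" by (rule euclidean_inner)
  finally show ?thesis by (simp add: power2_eq_square)
qed

lemma prod_std_normal_Basis: "(\<Prod>b\<in>Basis. std_normal_density ((x::real^'n) \<bullet> b)) = gd x"
proof -
  have "(\<Prod>b\<in>(Basis::(real^'n) set). std_normal_density (x \<bullet> b)) = (\<Prod>b\<in>(Basis::(real^'n) set). (1 / sqrt (2 * pi)) * exp (- ((x \<bullet> b)^2) / 2))"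
    by (simp add: std_normal_density_def)
  also have "\<dots> = (1 / sqrt (2 * pi)) ^ CARD('n) * exp (\<Sum>b\<in>(Basis::(real^'n) set). - ((x \<bullet> b)^2) / 2)"
    by (subst prod.distrib) (simp add: exp_sum)
  also have "(\<Sum>b\<in>(Basis::(real^'n) set). - ((x \<bullet> b)^2) / 2) = - ((norm x)^2) / 2"
    using sum_Basis_sq[of x] by (simp add: sum_divide_distrib[symmetric] sum_negf)
  finally show ?thesis by (simp add: gd_def)
qed

lemma std_gaussian_vec_alt: "std_gaussian_vec = density lborel (\<lambda>x. ennreal (gd x))"
  unfolding std_gaussian_vec_def prod_std_normal_UNIV ..

lemma nn_integral_std:
  assumes [measurable]: "f \<in> borel_measurable borel"
  shows "(\<integral>\<^sup>+x. f x \<partial>std_gaussian_vec) = (\<integral>\<^sup>+x. ennreal (gd x) * f x \<partial>lborel)"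
  unfolding std_gaussian_vec_alt by (subst nn_integral_density) auto

lemma space_std[simp]: "space std_gaussian_vec = UNIV"
  by (simp add: std_gaussian_vec_alt)

lemma sets_std[simp]: "sets std_gaussian_vec = sets borel"
  by (simp add: std_gaussian_vec_alt)

lemma prob_space_std: "prob_space (std_gaussian_vec :: (real^'n) measure)"
proof
  have "emeasure (std_gaussian_vec :: (real^'n) measure) (space std_gaussian_vec) = (\<integral>\<^sup>+x. ennreal (gd (x::real^'n)) \<partial>lborel)"
    unfolding std_gaussian_vec_alt by (subst emeasure_density) auto
  also have "\<dots> = (\<integral>\<^sup>+x. (\<Prod>b\<in>(Basis::(real^'n) set). ennreal (std_normal_density (x \<bullet> b))) \<partial>lborel)"
    by (simp add: prod_std_normal_Basis[symmetric] prod_ennreal)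
  also have "\<dots> = (\<Prod>b\<in>(Basis::(real^'n) set). (\<integral>\<^sup>+x. ennreal (std_normal_density x) \<partial>lborel))"
    by (rule nn_integral_lborel_prod) auto
  also have "\<dots> = 1"
  proof -
    have "(\<integral>\<^sup>+x. ennreal (std_normal_density x) \<partial>lborel) = 1"
      by (subst nn_integral_eq_integral) auto
    thus ?thesis by simp
  qed
  finally show "emeasure (std_gaussian_vec :: (real^'n) measure) (space std_gaussian_vec) = 1" .
qed

lemma gd_orth: fixes T :: "real^'n \<Rightarrow> real^'n" shows "orthogonal_transformation T \<Longrightarrow> gd (T x) = gd x"
  by (simp add: gd_def orthogonal_transformation_norm)

lemma nn_integral_std_rotate:
  fixes T :: "real^'n \<Rightarrow> real^'n"
  assumes T: "orthogonal_transformation T" and [measurable]: "f \<in> borel_measurable borel"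
  shows "(\<integral>\<^sup>+x. f (T x) \<partial>std_gaussian_vec) = (\<integral>\<^sup>+x. f x \<partial>std_gaussian_vec)"
proof -
  have linT: "linear T" using T orthogonal_transformation_linear by blast
  have [measurable]: "T \<in> borel_measurable borel"
    using linT by (intro borel_measurable_continuous_onI linear_continuous_on linear_conv_bounded_linear[THEN iffD1])
  have "(\<integral>\<^sup>+x. f (T x) \<partial>std_gaussian_vec) = (\<integral>\<^sup>+x. ennreal (gd x) * f (T x) \<partial>lborel)"
    by (rule nn_integral_std) measurable
  also have "\<dots> = (\<integral>\<^sup>+x. ennreal (gd (T x)) * f (T x) \<partial>lborel)"
    using gd_orth[OF T] by simp
  also have "\<dots> = (\<integral>\<^sup>+y. ennreal (gd y) * f y \<partial>distr lborel borel T)"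
    by (subst nn_integral_distr) auto
  also have "\<dots> = (\<integral>\<^sup>+y. ennreal (gd y) * f y \<partial>lborel)"
    by (simp add: lborel_orthogonal_invariant[OF T])
  also have "\<dots> = (\<integral>\<^sup>+x. f x \<partial>std_gaussian_vec)"
    by (rule nn_integral_std[symmetric]) measurable
  finally show ?thesis .
qed


lemma nn_integral_reflect:
  assumes [measurable]: "f \<in> borel_measurable borel"
  shows "(\<integral>\<^sup>+x. f x \<partial>(lborel::real measure)) = (\<integral>\<^sup>+x. f (- x) \<partial>lborel)"
proof -
  have "(\<integral>\<^sup>+x. f x \<partial>(lborel::real measure)) = (\<integral>\<^sup>+x. f x \<partial>distr lborel borel uminus)"
    by (simp add: lborel_distr_uminus)
  also have "\<dots> = (\<integral>\<^sup>+x. f (- x) \<partial>lborel)"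
    by (subst nn_integral_distr) auto
  finally show ?thesis .
qed

lemma cauchy_half:
  fixes r :: real assumes r: "r > 0"
  shows "(\<integral>\<^sup>+x. ennreal (r / (x^2 + r)) * indicator {0..} x \<partial>lborel) = ennreal (sqrt r * pi / 2)"
proof -
  have sr: "sqrt r > 0" using r by simp
  have d: "DERIV (\<lambda>x. sqrt r * arctan (x / sqrt r)) x :> r / (x^2 + r)" for x
  proof -
    have sq: "(x / sqrt r)^2 = x^2 / r" using r by (simp add: power_divide)
    have ss: "sqrt r * sqrt r = r" using r by simp
    have e: "inverse (1 + x^2 / r) * sqrt r * sqrt r / r = r / (x^2 + r)"
    proof -
      have "inverse (1 + x^2 / r) * sqrt r * sqrt r / r = inverse (1 + x^2 / r) * (sqrt r * sqrt r) / r"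
        using r by (simp add: mult.assoc)
      also have "\<dots> = inverse (1 + x^2 / r)" using r by (simp only: ss) simp
      also have "\<dots> = r / (x^2 + r)" using r by (simp add: field_simps)
      finally show ?thesis .
    qed
    show ?thesis
      using r by (auto intro!: derivative_eq_intros simp: sq e)
  qed
  have fl: "filterlim (\<lambda>x. x / sqrt r) at_top at_top"
  proof -
    have "filterlim (\<lambda>x. (1 / sqrt r) * x) at_top at_top"
      by (rule filterlim_tendsto_pos_mult_at_top[OF tendsto_const]) (use sr in \<open>auto intro: filterlim_ident\<close>)
    thus ?thesis by simp
  qed
  have lim: "((\<lambda>x. sqrt r * arctan (x / sqrt r)) \<longlongrightarrow> sqrt r * (pi / 2)) at_top"
    by (intro tendsto_intros filterlim_compose[OF tendsto_arctan_at_top fl])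
  have "(\<integral>\<^sup>+x. ennreal (r / (x^2 + r)) * indicator {0..} x \<partial>lborel) = sqrt r * (pi / 2) - sqrt r * arctan (0 / sqrt r)"
    by (rule nn_integral_FTC_atLeast[OF _ d _ lim]) (use r in \<open>auto intro!: divide_nonneg_pos add_nonneg_pos\<close>)
  thus ?thesis by simp
qed

lemma cauchy_full:
  fixes r :: real assumes r: "r > 0"
  shows "(\<integral>\<^sup>+x. ennreal (r / (x^2 + r)) \<partial>lborel) \<le> ennreal (pi * sqrt r)"
proof -
  let ?f = "\<lambda>x::real. ennreal (r / (x^2 + r))"
  have "(\<integral>\<^sup>+x. ?f x \<partial>lborel) \<le> (\<integral>\<^sup>+x. ?f x * indicator {0..} x + ?f x * indicator {..0} x \<partial>lborel)"
    by (intro nn_integral_mono) (auto split: split_indicator)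
  also have "\<dots> = (\<integral>\<^sup>+x. ?f x * indicator {0..} x \<partial>lborel) + (\<integral>\<^sup>+x. ?f x * indicator {..0} x \<partial>lborel)"
    by (rule nn_integral_add) auto
  also have "(\<integral>\<^sup>+x. ?f x * indicator {..0} x \<partial>lborel) = (\<integral>\<^sup>+x. ?f (-x) * indicator {..0} (-x) \<partial>lborel)"
    by (rule nn_integral_reflect) auto
  also have "\<dots> = (\<integral>\<^sup>+x. ?f x * indicator {0..} x \<partial>lborel)"
    by (intro nn_integral_cong) (auto split: split_indicator)
  also have "(\<integral>\<^sup>+x. ?f x * indicator {0..} x \<partial>lborel) = ennreal (sqrt r * pi / 2)"
    by (rule cauchy_half[OF r])
  also have "ennreal (sqrt r * pi / 2) + ennreal (sqrt r * pi / 2) = ennreal (pi * sqrt r)"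
    using r by (simp add: ennreal_plus[symmetric] del: ennreal_plus)
  finally show ?thesis by simp
qed

lemma one_dim_bound:
  fixes a c Y :: real assumes a: "a \<ge> 0" and c: "c \<ge> 0" and Y: "Y \<ge> 0"
  shows "(\<integral>\<^sup>+y. ennreal (std_normal_density y * (2*a*c*Y / (a*y^2 + c*Y))) \<partial>lborel)
     \<le> ennreal (sqrt (2*pi) * sqrt (a*c*Y))"
proof (cases "a*c*Y = 0")
  case True
  hence "\<And>y. std_normal_density y * (2*a*c*Y / (a*y^2 + c*Y)) = 0" by simp
  thus ?thesis by (simp only:) simp
next
  case False
  hence pos: "a > 0" "c > 0" "Y > 0" using a c Y by (auto simp: less_le)
  define r where "r = c*Y/a"
  have r: "r > 0" using pos by (simp add: r_def)
  have eq: "2*a*c*Y / (a*y^2 + c*Y) = 2*a * (r / (y^2 + r))" for y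
    using pos by (simp add: r_def field_simps)
  have phi: "std_normal_density y \<le> 1 / sqrt (2*pi)" for y
    by (simp add: std_normal_density_def divide_right_mono)
  have "(\<integral>\<^sup>+y. ennreal (std_normal_density y * (2*a*c*Y / (a*y^2 + c*Y))) \<partial>lborel)
      \<le> (\<integral>\<^sup>+y. ennreal (2*a / sqrt (2*pi)) * ennreal (r / (y^2 + r)) \<partial>lborel)"
  proof (intro nn_integral_mono)
    fix y
    have "std_normal_density y * (2*a*c*Y / (a*y^2 + c*Y)) \<le> (1 / sqrt (2*pi)) * (2*a * (r / (y^2 + r)))"
      unfolding eq using phi[of y] pos r by (intro mult_right_mono) auto
    thus "ennreal (std_normal_density y * (2*a*c*Y / (a*y^2 + c*Y))) \<le> ennreal (2*a / sqrt (2*pi)) * ennreal (r / (y^2 + r))"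
      using pos r by (simp add: ennreal_mult[symmetric] ennreal_leI)
  qed
  also have "\<dots> = ennreal (2*a / sqrt (2*pi)) * (\<integral>\<^sup>+y. ennreal (r / (y^2 + r)) \<partial>lborel)"
    by (rule nn_integral_cmult) auto
  also have "\<dots> \<le> ennreal (2*a / sqrt (2*pi)) * ennreal (pi * sqrt r)"
    by (intro mult_left_mono cauchy_full r) auto
  also have "\<dots> = ennreal (2*a / sqrt (2*pi) * (pi * sqrt r))"
    by (rule ennreal_mult[symmetric]) (use pos r in auto)
  also have "2*a / sqrt (2*pi) * (pi * sqrt r) = sqrt (2*pi) * sqrt (a*c*Y)"
  proof -
    have "sqrt (a*c*Y) = sqrt (a*a*r)" using pos by (simp add: r_def field_simps)
    also have "\<dots> = a * sqrt r" using pos by (simp add: real_sqrt_mult)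
    finally have "sqrt (a*c*Y) = a * sqrt r" .
    moreover have "2*pi / sqrt (2*pi) = sqrt (2*pi)" by (simp add: real_div_sqrt)
    ultimately show ?thesis by (simp add: field_simps)
  qed
  finally show ?thesis .
qed


definition Hf :: "real \<Rightarrow> real \<Rightarrow> real \<Rightarrow> real \<Rightarrow> real" where
  "Hf a c y Y = 2*a*c*Y / (a*y^2 + c*Y)"

lemma Hf_nonneg: "a \<ge> 0 \<Longrightarrow> c \<ge> 0 \<Longrightarrow> Y \<ge> 0 \<Longrightarrow> Hf a c y Y \<ge> 0"
  by (simp add: Hf_def)

lemma nn_std_normal_1: "(\<integral>\<^sup>+x. ennreal (std_normal_density x) \<partial>lborel) = 1"
  by (subst nn_integral_eq_integral) auto

lemma nn_std_normal_2: "(\<integral>\<^sup>+x. ennreal (std_normal_density x * x^2) \<partial>lborel) = 1"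
proof -
  have i: "(LBINT x. std_normal_density x * x^2) = 1"
    using integral_std_normal_moment_even[of 1] by (simp add: fact_2)
  show ?thesis
    by (subst nn_integral_eq_integral) (auto intro: integrable_std_normal_moment simp: i)
qed

lemma sqrt_le_amgm: "s > 0 \<Longrightarrow> Y \<ge> 0 \<Longrightarrow> sqrt Y \<le> (Y / s + s) / 2"
proof -
  assume s: "s > 0" and Y: "Y \<ge> 0"
  have "0 \<le> (sqrt Y - s)^2" by simp
  hence "2 * s * sqrt Y \<le> Y + s^2" using Y by (simp add: power2_eq_square algebra_simps)
  thus ?thesis using s by (simp add: field_simps power2_eq_square)
qed

lemma gauss_split:
  fixes e :: "real^'n" and a c :: real
  assumes e: "e \<in> Basis" and a: "a \<ge> 0" and c: "c \<ge> 0"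
  shows "(\<integral>\<^sup>+x. ennreal (Hf a c (x \<bullet> e) (\<Sum>b\<in>Basis-{e}. (x \<bullet> b)^2)) \<partial>std_gaussian_vec)
     \<le> ennreal (sqrt (2*pi) * sqrt (a * c * CARD('n)))"
proof -
  interpret product_sigma_finite "\<lambda>_::real^'n. lborel::real measure" by standard
  define B' where "B' = (Basis::(real^'n) set) - {e}"
  have B'fin: "finite B'" and eB': "e \<notin> B'" and ins: "insert e B' = Basis"
    using e by (auto simp: B'_def)
  define P where "P F = (\<Prod>b\<in>B'. std_normal_density (F b))" for F :: "real^'n \<Rightarrow> real"
  define Yf where "Yf F = (\<Sum>b\<in>B'. (F b)^2)" for F :: "real^'n \<Rightarrow> real"
  define n where "n = real CARD('n)"
  define s where "s = sqrt n"
  define K where "K = sqrt (2*pi) * sqrt (a*c)"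
  have n1: "n \<ge> 1" by (simp add: n_def)
  have s: "s > 0" "s * s = n" using n1 by (auto simp: s_def)
  have K: "K \<ge> 0" using a c by (simp add: K_def)
  have cardB': "real (card B') = n - 1"
    using e by (simp add: B'_def n_def card_Diff_singleton of_nat_diff)
  have P_nn: "P F \<ge> 0" for F by (simp add: P_def prod_nonneg)
  have Y_nn: "Yf F \<ge> 0" for F by (simp add: Yf_def sum_nonneg)
  have [measurable]: "(\<lambda>F. \<Sum>b\<in>Basis. F b *\<^sub>R b) \<in> measurable (Pi\<^sub>M Basis (\<lambda>_. lborel)) (borel :: (real^'n) measure)"
    by measurable
  have inner_sum: "(\<Sum>b\<in>Basis. F b *\<^sub>R b) \<bullet> b' = F b'" if "b' \<in> Basis" for F and b' :: "real^'n"
    using that by (simp add: inner_sum_left inner_Basis if_distrib cong: if_cong)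
  let ?h = "\<lambda>x::real^'n. ennreal (Hf a c (x \<bullet> e) (\<Sum>b\<in>Basis-{e}. (x \<bullet> b)^2))"
  have "(\<integral>\<^sup>+x. ?h x \<partial>std_gaussian_vec) = (\<integral>\<^sup>+x. ennreal (gd x) * ?h x \<partial>lborel)"
    by (rule nn_integral_std) (simp add: Hf_def)
  also have "\<dots> = (\<integral>\<^sup>+x. ennreal (gd x) * ?h x \<partial>distr (Pi\<^sub>M Basis (\<lambda>_. lborel)) borel (\<lambda>F. \<Sum>b\<in>Basis. F b *\<^sub>R b))"
    by (simp only: lborel_eq[where 'a="real^'n", symmetric])
  also have "\<dots> = (\<integral>\<^sup>+F. ennreal (gd (\<Sum>b\<in>Basis. F b *\<^sub>R b)) * ?h (\<Sum>b\<in>Basis. F b *\<^sub>R b) \<partial>Pi\<^sub>M Basis (\<lambda>_. lborel))"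
    by (subst nn_integral_distr) (auto simp: Hf_def)
  also have "\<dots> = (\<integral>\<^sup>+F. ennreal ((\<Prod>b\<in>Basis. std_normal_density (F b)) * Hf a c (F e) (\<Sum>b\<in>B'. (F b)^2)) \<partial>Pi\<^sub>M Basis (\<lambda>_. lborel))"
  proof (intro nn_integral_cong)
    fix F :: "real^'n \<Rightarrow> real"
    have "gd (\<Sum>b\<in>Basis. F b *\<^sub>R b) = (\<Prod>b\<in>Basis. std_normal_density (F b))"
      unfolding prod_std_normal_Basis[symmetric] by (intro prod.cong refl) (simp add: inner_sum)
    moreover have "(\<Sum>b\<in>Basis-{e}. ((\<Sum>b\<in>Basis. F b *\<^sub>R b) \<bullet> b)^2) = (\<Sum>b\<in>B'. (F b)^2)"
      unfolding B'_def by (intro sum.cong refl) (simp add: inner_sum)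
    ultimately show "ennreal (gd (\<Sum>b\<in>Basis. F b *\<^sub>R b)) * ?h (\<Sum>b\<in>Basis. F b *\<^sub>R b) =
      ennreal ((\<Prod>b\<in>Basis. std_normal_density (F b)) * Hf a c (F e) (\<Sum>b\<in>B'. (F b)^2))"
      using e by (simp add: inner_sum ennreal_mult[symmetric] prod_nonneg Hf_nonneg[OF a c] sum_nonneg)
  qed
  also have "\<dots> = (\<integral>\<^sup>+F. (\<integral>\<^sup>+y. ennreal ((\<Prod>b\<in>insert e B'. std_normal_density ((F(e:=y)) b)) * Hf a c ((F(e:=y)) e) (\<Sum>b\<in>B'. ((F(e:=y)) b)^2)) \<partial>lborel) \<partial>Pi\<^sub>M B' (\<lambda>_. lborel))"
    unfolding ins[symmetric] by (rule product_nn_integral_insert[OF B'fin eB']) (simp add: Hf_def)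
  also have "\<dots> = (\<integral>\<^sup>+F. (\<integral>\<^sup>+y. ennreal (P F) * ennreal (std_normal_density y * Hf a c y (Yf F)) \<partial>lborel) \<partial>Pi\<^sub>M B' (\<lambda>_. lborel))"
  proof (intro nn_integral_cong)
    fix F y
    have "(\<Prod>b\<in>insert e B'. std_normal_density ((F(e:=y)) b)) = std_normal_density y * P F"
    proof -
      have pB: "(\<Prod>b\<in>B'. std_normal_density ((F(e:=y)) b)) = P F"
        unfolding P_def using eB' by (intro prod.cong refl) auto
      show ?thesis unfolding prod.insert[OF B'fin eB'] pB by simp
    qed
    moreover have "(\<Sum>b\<in>B'. ((F(e:=y)) b)^2) = Yf F"
      using eB' unfolding Yf_def by (intro sum.cong refl) auto
    ultimately show "ennreal ((\<Prod>b\<in>insert e B'. std_normal_density ((F(e:=y)) b)) * Hf a c ((F(e:=y)) e) (\<Sum>b\<in>B'. ((F(e:=y)) b)^2))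
      = ennreal (P F) * ennreal (std_normal_density y * Hf a c y (Yf F))"
      using P_nn[of F] Hf_nonneg[OF a c Y_nn[of F]] by (simp add: ennreal_mult'' mult_ac)
  qed
  also have "\<dots> \<le> (\<integral>\<^sup>+F. (ennreal (K / (2 * s)) * ennreal (P F * Yf F) + ennreal (K * s / 2) * ennreal (P F)) \<partial>Pi\<^sub>M B' (\<lambda>_. lborel))"
  proof (intro nn_integral_mono)
    fix F
    have "(\<integral>\<^sup>+y. ennreal (P F) * ennreal (std_normal_density y * Hf a c y (Yf F)) \<partial>lborel)
        = ennreal (P F) * (\<integral>\<^sup>+y. ennreal (std_normal_density y * Hf a c y (Yf F)) \<partial>lborel)"
      by (rule nn_integral_cmult) (simp add: Hf_def)
    also have "\<dots> \<le> ennreal (P F) * ennreal (sqrt (2*pi) * sqrt (a*c*Yf F))"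
      by (intro mult_left_mono) (use one_dim_bound[OF a c Y_nn[of F]] in \<open>simp_all add: Hf_def\<close>)
    also have "\<dots> \<le> ennreal (P F) * ennreal (K * ((Yf F / s + s) / 2))"
    proof (intro mult_left_mono ennreal_leI)
      have "sqrt (2*pi) * sqrt (a*c*Yf F) = K * sqrt (Yf F)" by (simp add: K_def real_sqrt_mult)
      also have "\<dots> \<le> K * ((Yf F / s + s) / 2)" by (intro mult_left_mono sqrt_le_amgm s Y_nn K)
      finally show "sqrt (2*pi) * sqrt (a*c*Yf F) \<le> K * ((Yf F / s + s) / 2)" .
    qed simp
    also have "\<dots> = ennreal (K / (2 * s)) * ennreal (P F * Yf F) + ennreal (K * s / 2) * ennreal (P F)"
    proof -
      have r: "P F * (K * ((Yf F / s + s) / 2)) = K / (2 * s) * (P F * Yf F) + K * s / 2 * P F"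
        using s by (simp add: field_simps)
      have "ennreal (P F) * ennreal (K * ((Yf F / s + s) / 2)) = ennreal (P F * (K * ((Yf F / s + s) / 2)))"
      proof (rule ennreal_mult[symmetric])
        have "Yf F / s + s \<ge> 0" using s Y_nn[of F] by simp
        thus "0 \<le> K * ((Yf F / s + s) / 2)" using K by simp
      qed (rule P_nn)
      also have "\<dots> = ennreal (K / (2 * s) * (P F * Yf F)) + ennreal (K * s / 2 * P F)"
        unfolding r using s K P_nn[of F] Y_nn[of F] by (intro ennreal_plus) auto
      also have "\<dots> = ennreal (K / (2 * s)) * ennreal (P F * Yf F) + ennreal (K * s / 2) * ennreal (P F)"
      proof -
        have 1: "ennreal (K / (2 * s) * (P F * Yf F)) = ennreal (K / (2 * s)) * ennreal (P F * Yf F)"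
          by (rule ennreal_mult) (use s K P_nn[of F] Y_nn[of F] in auto)
        have 2: "ennreal (K * s / 2 * P F) = ennreal (K * s / 2) * ennreal (P F)"
          by (rule ennreal_mult) (use s K P_nn[of F] Y_nn[of F] in auto)
        show ?thesis unfolding 1 2 ..
      qed
      finally show ?thesis .
    qed
    finally show "(\<integral>\<^sup>+y. ennreal (P F) * ennreal (std_normal_density y * Hf a c y (Yf F)) \<partial>lborel)
      \<le> ennreal (K / (2 * s)) * ennreal (P F * Yf F) + ennreal (K * s / 2) * ennreal (P F)" .
  qed
  also have "\<dots> = ennreal (K / (2 * s)) * (\<integral>\<^sup>+F. ennreal (P F * Yf F) \<partial>Pi\<^sub>M B' (\<lambda>_. lborel))
                 + ennreal (K * s / 2) * (\<integral>\<^sup>+F. ennreal (P F) \<partial>Pi\<^sub>M B' (\<lambda>_. lborel))"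
    by (subst nn_integral_add) (auto simp: P_def Yf_def nn_integral_cmult)
  also have "(\<integral>\<^sup>+F. ennreal (P F) \<partial>Pi\<^sub>M B' (\<lambda>_. lborel)) = 1"
  proof -
    have "(\<integral>\<^sup>+F. ennreal (P F) \<partial>Pi\<^sub>M B' (\<lambda>_. lborel)) = (\<integral>\<^sup>+F. (\<Prod>b\<in>B'. ennreal (std_normal_density (F b))) \<partial>Pi\<^sub>M B' (\<lambda>_. lborel))"
      by (simp add: P_def prod_ennreal)
    also have "\<dots> = (\<Prod>b\<in>B'. (\<integral>\<^sup>+x. ennreal (std_normal_density x) \<partial>lborel))"
      by (rule product_nn_integral_prod[OF B'fin]) simp
    finally show ?thesis by (simp add: nn_std_normal_1)
  qed
  also have "(\<integral>\<^sup>+F. ennreal (P F * Yf F) \<partial>Pi\<^sub>M B' (\<lambda>_. lborel)) = ennreal (n - 1)"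
  proof -
    have "(\<integral>\<^sup>+F. ennreal (P F * Yf F) \<partial>Pi\<^sub>M B' (\<lambda>_. lborel))
        = (\<integral>\<^sup>+F. (\<Sum>b'\<in>B'. (\<Prod>b\<in>B'. ennreal (std_normal_density (F b) * (if b = b' then (F b)^2 else 1)))) \<partial>Pi\<^sub>M B' (\<lambda>_. lborel))"
    proof (intro nn_integral_cong)
      fix F
      have "P F * Yf F = (\<Sum>b'\<in>B'. (\<Prod>b\<in>B'. std_normal_density (F b) * (if b = b' then (F b)^2 else 1)))"
      proof -
        have "P F * Yf F = (\<Sum>b'\<in>B'. P F * (F b')^2)" by (simp add: Yf_def sum_distrib_left)
        also have "\<dots> = (\<Sum>b'\<in>B'. (\<Prod>b\<in>B'. std_normal_density (F b) * (if b = b' then (F b)^2 else 1)))"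
        proof (intro sum.cong refl)
          fix b' assume "b' \<in> B'"
          have "(\<Prod>b\<in>B'. std_normal_density (F b) * (if b = b' then (F b)^2 else 1))
              = P F * (\<Prod>b\<in>B'. (if b = b' then (F b)^2 else 1))"
            by (simp add: P_def prod.distrib)
          also have "(\<Prod>b\<in>B'. (if b = b' then (F b)^2 else 1)) = (F b')^2"
            using \<open>b' \<in> B'\<close> B'fin by (simp add: prod.delta)
          finally show "P F * (F b')^2 = (\<Prod>b\<in>B'. std_normal_density (F b) * (if b = b' then (F b)^2 else 1))" by simp
        qed
        finally show ?thesis .
      qed
      thus "ennreal (P F * Yf F) = (\<Sum>b'\<in>B'. (\<Prod>b\<in>B'. ennreal (std_normal_density (F b) * (if b = b' then (F b)^2 else 1))))"
        by (simp add: prod_ennreal sum_ennreal prod_nonneg sum_nonneg)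
    qed
    also have "\<dots> = (\<Sum>b'\<in>B'. (\<integral>\<^sup>+F. (\<Prod>b\<in>B'. ennreal (std_normal_density (F b) * (if b = b' then (F b)^2 else 1))) \<partial>Pi\<^sub>M B' (\<lambda>_. lborel)))"
      by (rule nn_integral_sum) simp
    also have "\<dots> = (\<Sum>b'\<in>B'. (\<Prod>b\<in>B'. (\<integral>\<^sup>+x. ennreal (std_normal_density x * (if b = b' then x^2 else 1)) \<partial>lborel)))"
      by (intro sum.cong refl product_nn_integral_prod[OF B'fin]) simp
    also have "\<dots> = (\<Sum>b'\<in>B'. 1)"
    proof -
      have one: "(\<integral>\<^sup>+x. ennreal (std_normal_density x * (if b = b' then x^2 else 1)) \<partial>lborel) = 1" for b b' :: "real^'n"
        by (cases "b = b'") (simp_all add: nn_std_normal_1 nn_std_normal_2)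
      show ?thesis by (intro sum.cong refl prod.neutral ballI one)
    qed
    also have "\<dots> = ennreal (n - 1)" using cardB' by (metis ennreal_of_nat_eq_real_of_nat sum_constant mult_1_right)
    finally show ?thesis .
  qed
  also have "ennreal (K / (2 * s)) * ennreal (n - 1) + ennreal (K * s / 2) * 1 \<le> ennreal (K * s)"
  proof -
    have "K / (2 * s) * (n - 1) \<le> K * s / 2"
    proof -
      have "(n - 1) / s \<le> s" using s by (simp add: field_simps)
      hence "K * ((n - 1) / s) \<le> K * s" by (rule mult_left_mono[OF _ K])
      moreover have "K / (2 * s) * (n - 1) = (K * ((n - 1) / s)) / 2" by simp
      ultimately show ?thesis by simp
    qed
    hence "K / (2 * s) * (n - 1) + K * s / 2 \<le> K * s" by simp
    thus ?thesis using s K n1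
      by (simp add: ennreal_mult''[symmetric] ennreal_plus[symmetric] del: ennreal_plus)
  qed
  also have "K * s = sqrt (2*pi) * sqrt (a * c * CARD('n))"
    by (simp add: K_def s_def n_def real_sqrt_mult)
  finally show ?thesis .
qed


lemma sym_dot:
  fixes A :: "real^'n^'n"
  assumes "transpose A = A"
  shows "x \<bullet> (A *v y) = (A *v x) \<bullet> y"
  by (metis assms dot_lmul_matrix transpose_matrix_vector)

lemma zero_from_quadratic:
  fixes p K :: real
  assumes "\<And>s. 2 * s * p \<le> s^2 * K"
  shows "p = 0"
proof (rule ccontr)
  assume "p \<noteq> 0"
  define c where "c = \<bar>K\<bar> + 1"
  have c: "c > 0" "\<bar>K\<bar> < c" by (auto simp: c_def)
  define s where "s = p / c"
  have pp: "p^2 > 0" using \<open>p \<noteq> 0\<close> by simp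
  have "2 * s * p = 2 * p^2 / c" by (simp add: s_def power2_eq_square)
  moreover have "s^2 * K = (p^2 / c) * (K / c)" by (simp add: s_def power2_eq_square)
  moreover have "K / c < 1" using c by (simp add: divide_less_eq) 
  moreover have "p^2 / c > 0" using pp c by simp
  ultimately have "s^2 * K < 2 * s * p"
  proof -
    assume h: "2 * s * p = 2 * p^2 / c" "s^2 * K = (p^2 / c) * (K / c)" "K / c < 1" "p^2 / c > 0"
    have "(p^2 / c) * (K / c) < (p^2 / c) * 1" using h(3,4) by (rule mult_strict_left_mono)
    thus ?thesis using h(1,2,4) by simp
  qed
  thus False using assms[of s] by simp
qed

lemma eigen_in_subspace:
  fixes A :: "real^'n^'n"
  assumes sym: "transpose A = A" and S: "subspace S" and inv: "\<And>x. x \<in> S \<Longrightarrow> A *v x \<in> S"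
    and ne: "S \<noteq> {0}"
  obtains v where "v \<in> S" "norm v = 1" "A *v v = (v \<bullet> (A *v v)) *\<^sub>R v"
proof -
  let ?K = "S \<inter> sphere 0 1"
  have "compact ?K" using S closed_subspace closed_Int_compact compact_sphere by blast
  moreover have "?K \<noteq> {}"
  proof -
    obtain x where x: "x \<in> S" "x \<noteq> 0" using ne S subspace_0 by blast
    have "(1/norm x) *\<^sub>R x \<in> S" using S x subspace_scale by blast
    moreover have "norm ((1/norm x) *\<^sub>R x) = 1" using x by simp
    ultimately show ?thesis by auto
  qed
  moreover have "continuous_on ?K (\<lambda>x. x \<bullet> (A *v x))"
    by (intro continuous_intros)
  ultimately obtain v where v: "v \<in> ?K" and vmax: "\<And>y. y \<in> ?K \<Longrightarrow> y \<bullet> (A *v y) \<le> v \<bullet> (A *v v)"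
    using continuous_attains_sup by (metis (no_types, lifting))
  define l where "l = v \<bullet> (A *v v)"
  have vS: "v \<in> S" and nv: "norm v = 1" using v by auto
  have hom: "x \<bullet> (A *v x) \<le> l * (x \<bullet> x)" if "x \<in> S" for x
  proof (cases "x = 0")
    case True thus ?thesis by simp
  next
    case False
    let ?y = "(1/norm x) *\<^sub>R x"
    have "?y \<in> ?K" using that False S subspace_scale by auto
    hence "?y \<bullet> (A *v ?y) \<le> l" using vmax l_def by blast
    hence "(1/norm x)^2 * (x \<bullet> (A *v x)) \<le> l"
      by (simp add: matrix_vector_mult_scaleR power2_eq_square algebra_simps)
    moreover have "x \<bullet> x = (norm x)^2" by (simp add: power2_norm_eq_inner)
    moreover have "norm x > 0" using False by simp
    ultimately show ?thesis by (simp add: field_simps)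
  qed
  have orth: "w \<bullet> (A *v v) = 0" if w: "w \<in> S" "w \<bullet> v = 0" for w
  proof (rule zero_from_quadratic)
    fix s :: real
    have "v + s *\<^sub>R w \<in> S" using S vS w subspace_add subspace_scale by blast
    hence le: "(v + s *\<^sub>R w) \<bullet> (A *v (v + s *\<^sub>R w)) \<le> l * ((v + s *\<^sub>R w) \<bullet> (v + s *\<^sub>R w))"
      by (rule hom)
    have e1: "(v + s *\<^sub>R w) \<bullet> (A *v (v + s *\<^sub>R w)) = l + 2 * s * (w \<bullet> (A *v v)) + s^2 * (w \<bullet> (A *v w))"
      using sym_dot[OF sym, of v w]
      by (simp add: inner_commute[of "A *v v" w] matrix_vector_right_distrib matrix_vector_mult_scaleR inner_add_left inner_add_right l_def power2_eq_square algebra_simps)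
    have e2: "(v + s *\<^sub>R w) \<bullet> (v + s *\<^sub>R w) = 1 + s^2 * (w \<bullet> w)"
      using w nv by (simp add: inner_add_left inner_add_right inner_commute power2_eq_square norm_eq_1 algebra_simps)
    have "l + 2 * s * (w \<bullet> (A *v v)) + s^2 * (w \<bullet> (A *v w)) \<le> l * (1 + s^2 * (w \<bullet> w))"
      using le unfolding e1 e2 .
    thus "2 * s * (w \<bullet> (A *v v)) \<le> s^2 * (l * (w \<bullet> w) - w \<bullet> (A *v w))"
      by (simp add: algebra_simps)
  qed
  define w where "w = A *v v - l *\<^sub>R v"
  have wS: "w \<in> S" unfolding w_def using inv vS S subspace_diff subspace_scale by blast
  have wv: "w \<bullet> v = 0" using nv by (simp add: w_def l_def inner_diff_left inner_commute norm_eq_1 inner_diff_right)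
  have "w \<bullet> w = w \<bullet> (A *v v) - l * (w \<bullet> v)" by (simp add: w_def inner_diff_right)
  also have "\<dots> = 0" using orth[OF wS wv] wv by simp
  finally have "w = 0" by simp
  hence "A *v v = l *\<^sub>R v" by (simp add: w_def)
  thus ?thesis using that vS nv l_def by blast
qed

lemma spectral_subspace:
  fixes A :: "real^'n^'n"
  assumes sym: "transpose A = A"
  shows "subspace S \<Longrightarrow> (\<And>x. x \<in> S \<Longrightarrow> A *v x \<in> S) \<Longrightarrow>
    \<exists>B. B \<subseteq> S \<and> finite B \<and> pairwise orthogonal B \<and> (\<forall>b\<in>B. norm b = 1) \<and> span B = S
       \<and> (\<forall>b\<in>B. A *v b = (b \<bullet> (A *v b)) *\<^sub>R b)"
proof (induction "dim S" arbitrary: S rule: less_induct)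
  case (less S)
  show ?case
  proof (cases "S = {0}")
    case True
    thus ?thesis by (intro exI[of _ "{}"]) auto
  next
    case False
    obtain v where v: "v \<in> S" "norm v = 1" "A *v v = (v \<bullet> (A *v v)) *\<^sub>R v"
      using eigen_in_subspace[OF sym less.prems False] by blast
    define S' where "S' = {x \<in> S. v \<bullet> x = 0}"
    have sub': "subspace S'" unfolding S'_def subspace_def using less.prems(1)
      by (auto simp: subspace_def inner_add_right)
    have inv': "A *v x \<in> S'" if "x \<in> S'" for x
    proof -
      have "v \<bullet> (A *v x) = (A *v v) \<bullet> x" by (rule sym_dot[OF sym])
      also have "\<dots> = (v \<bullet> (A *v v)) * (v \<bullet> x)" by (subst v(3)) simp
      also have "\<dots> = 0" using that by (simp add: S'_def)
      finally show ?thesis using that less.prems(2) by (simp add: S'_def)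
    qed
    have "S' \<subset> S"
    proof -
      have "v \<notin> S'" using v(2) by (auto simp: S'_def norm_eq_1)
      thus ?thesis using v(1) unfolding S'_def by blast
    qed
    hence "span S' \<subset> span S" by (metis sub' less.prems(1) span_eq_iff)
    hence "dim S' < dim S" by (rule dim_psubset)
    then obtain B where B: "B \<subseteq> S'" "finite B" "pairwise orthogonal B" "\<forall>b\<in>B. norm b = 1" "span B = S'"
      "\<forall>b\<in>B. A *v b = (b \<bullet> (A *v b)) *\<^sub>R b"
      using less.hyps[OF _ sub' inv'] by blast
    have vB: "v \<notin> B" using B(1) v(2) by (auto simp: S'_def norm_eq_1)
    show ?thesis
    proof (intro exI[of _ "insert v B"] conjI)
      show "insert v B \<subseteq> S" using B(1) v(1) S'_def by auto
      show "finite (insert v B)" using B(2) by simp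
      show "pairwise orthogonal (insert v B)"
        using B(1,3) unfolding pairwise_insert by (auto simp: S'_def orthogonal_def inner_commute)
      show "\<forall>b\<in>insert v B. norm b = 1" using B(4) v(2) by simp
      show "\<forall>b\<in>insert v B. A *v b = (b \<bullet> (A *v b)) *\<^sub>R b" using B(6) v(3) by simp
      show "span (insert v B) = S"
      proof
        show "span (insert v B) \<subseteq> S"
          using \<open>insert v B \<subseteq> S\<close> less.prems(1) span_minimal by blast
        show "S \<subseteq> span (insert v B)"
        proof
          fix x assume x: "x \<in> S"
          have "x - (v \<bullet> x) *\<^sub>R v \<in> S'"
            using x v less.prems(1) by (auto simp: S'_def subspace_diff subspace_scale inner_diff_right norm_eq_1)
          hence "x - (v \<bullet> x) *\<^sub>R v \<in> span (insert v B)" using B(5) span_mono[of B "insert v B"] by auto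
          moreover have "(v \<bullet> x) *\<^sub>R v \<in> span (insert v B)" by (simp add: span_base span_scale)
          ultimately have "(x - (v \<bullet> x) *\<^sub>R v) + (v \<bullet> x) *\<^sub>R v \<in> span (insert v B)"
            using span_add by blast
          thus "x \<in> span (insert v B)" by simp
        qed
      qed
    qed
  qed
qed


lemma scalar_ineq:
  fixes x d :: real and m :: nat
  assumes x: "0 \<le> x" "x \<le> 1" and m: "m \<ge> 1" and d: "1 / (real m + 1) \<le> d" "d \<le> 1"
  shows "(1 - x) * x^m \<le> d * x^m + d * (1 - d)^m"
proof (cases "x \<ge> 1 - d")
  case True
  hence "(1 - x) * x^m \<le> d * x^m" using x by (intro mult_right_mono) auto
  moreover have "0 \<le> d * (1 - d)^m" using d(2) x
    by (metis diff_ge_0_iff_ge mult_nonneg_nonneg order.trans zero_le_divide_1_iff zero_le_power d(1) of_nat_0_le_iff add_nonneg_nonneg zero_le_one)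
  ultimately show ?thesis by linarith
next
  case False
  let ?f = "\<lambda>y::real. (1 - y) * y^m"
  have md: "1 - d \<le> real m / (real m + 1)"
    using d(1) by (simp add: field_simps)
  have mono: "?f x \<le> ?f (1 - d)"
  proof (rule DERIV_nonneg_imp_nondecreasing[of x "1 - d" ?f])
    show "x \<le> 1 - d" using False by simp
    fix y assume y1: "x \<le> y" and y2: "y \<le> 1 - d"
    note y = y1 y2
    have y0: "0 \<le> y" using y x by simp
    have "y \<le> real m / (real m + 1)" using y md by linarith
    hence ym: "y * (real m + 1) \<le> real m" by (simp add: le_divide_eq)
    show "\<exists>y'. DERIV ?f y :> y' \<and> y' \<ge> 0"
    proof (intro exI conjI)
      show "DERIV ?f y :> (-1) * y^m + (1 - y) * (real m * y^(m - 1))"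
        by (auto intro!: derivative_eq_intros)
      have "y^m = y * y^(m-1)" using m by (metis One_nat_def Suc_pred less_le_trans power_Suc zero_less_one)
      moreover have "y * y^(m-1) \<le> (1 - y) * real m * y^(m-1)"
        by (intro mult_right_mono) (use ym y0 in \<open>auto simp: algebra_simps\<close>)
      ultimately show "(-1) * y^m + (1 - y) * (real m * y^(m - 1)) \<ge> 0" by (simp add: algebra_simps)
    qed
  qed
  have "d * (1 - d)^m = ?f (1 - d)" by simp
  moreover have "0 \<le> d * x^m" using x d(2) d(1) by (metis mult_nonneg_nonneg zero_le_power order.trans zero_le_divide_1_iff of_nat_0_le_iff add_nonneg_nonneg zero_le_one)
  ultimately show ?thesis using mono by linarith
qed

lemma err_bound_abstract:
  fixes B :: "'b set" and mu a :: "'b \<Rightarrow> real" and l d :: real and m :: nat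
  assumes B: "finite B" "v \<in> B" and l: "l > 0" and mu: "\<And>b. b \<in> B \<Longrightarrow> 0 \<le> mu b \<and> mu b \<le> l" "mu v = l"
    and av: "a v \<noteq> 0" and m: "m \<ge> 1" and d: "1 / (real m + 1) \<le> d" "d \<le> 1"
  shows "(l - (\<Sum>b\<in>B. mu b ^ (m+1) * (a b)^2) / (\<Sum>b\<in>B. mu b ^ m * (a b)^2)) / l
       \<le> d + d * (1 - d)^m * (\<Sum>b\<in>B-{v}. (a b)^2) / (a v)^2"
proof -
  define N where "N = (\<Sum>b\<in>B. mu b ^ (m+1) * (a b)^2)"
  define D where "D = (\<Sum>b\<in>B. mu b ^ m * (a b)^2)"
  define Y where "Y = (\<Sum>b\<in>B-{v}. (a b)^2)"
  define c0 where "c0 = d * (1 - d)^m"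
  have d0: "d \<ge> 0" using d(1) by (metis order.trans zero_le_divide_1_iff of_nat_0_le_iff add_nonneg_nonneg zero_le_one)
  have "mu v ^ m * (a v)^2 \<le> D"
    unfolding D_def using B mu by (intro member_le_sum) (auto intro!: mult_nonneg_nonneg)
  hence Dv: "D \<ge> l^m * (a v)^2" using mu(2) by simp
  have Dpos: "D > 0" using Dv l av by (smt (verit) zero_less_power zero_less_power2 mult_pos_pos)
  have trm: "(l - mu b) * mu b ^ m * (a b)^2 \<le> d * l * (mu b ^ m * (a b)^2) + (if b = v then 0 else c0 * l^(m+1) * (a b)^2)"
    if b: "b \<in> B" for b
  proof (cases "b = v")
    case True
    thus ?thesis using mu(2) d0 l by (simp add: mult_nonneg_nonneg)
  next
    case False
    define x where "x = mu b / l"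
    have x: "0 \<le> x" "x \<le> 1" using mu(1)[OF b] l by (auto simp: x_def)
    have mb: "mu b = x * l" using l by (simp add: x_def)
    have "(1 - x) * x^m \<le> d * x^m + c0" using scalar_ineq[OF x m d] by (simp add: c0_def)
    hence "((1 - x) * x^m) * (l^(m+1) * (a b)^2) \<le> (d * x^m + c0) * (l^(m+1) * (a b)^2)"
      using l by (intro mult_right_mono) auto
    thus ?thesis using False l by (simp add: mb power_mult_distrib algebra_simps)
  qed
  have "l * D - N = (\<Sum>b\<in>B. (l - mu b) * mu b ^ m * (a b)^2)"
    by (simp add: D_def N_def sum_distrib_left sum_subtractf[symmetric] algebra_simps)
  also have "\<dots> \<le> (\<Sum>b\<in>B. d * l * (mu b ^ m * (a b)^2) + (if b = v then 0 else c0 * l^(m+1) * (a b)^2))"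
    by (intro sum_mono trm)
  also have "\<dots> = d * l * D + c0 * l^(m+1) * Y"
  proof -
    have "(\<Sum>b\<in>B. (if b = v then 0 else c0 * l^(m+1) * (a b)^2)) = (\<Sum>b\<in>B-{v}. c0 * l^(m+1) * (a b)^2)"
      using B by (simp add: sum.If_cases Diff_eq Int_commute)
    thus ?thesis by (simp add: sum.distrib D_def Y_def sum_distrib_left)
  qed
  finally have key: "l * D - N \<le> d * l * D + c0 * l^(m+1) * Y" .
  have "(l - N / D) / l = (l * D - N) / (l * D)" using Dpos l by (simp add: field_simps)
  also have "\<dots> \<le> (d * l * D + c0 * l^(m+1) * Y) / (l * D)"
    using Dpos l key by (intro divide_right_mono) auto
  also have "\<dots> = d + c0 * l^m * Y / D" using Dpos l by (simp add: field_simps)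
  also have "\<dots> \<le> d + c0 * Y / (a v)^2"
  proof -
    have Y0: "Y \<ge> 0" by (simp add: Y_def sum_nonneg)
    have c00: "c0 \<ge> 0" using d d0 by (simp add: c0_def)
    have "l^m * Y / D \<le> l^m * Y / (l^m * (a v)^2)"
      using Dv Y0 l av Dpos by (intro divide_left_mono mult_nonneg_nonneg mult_pos_pos) auto
    also have "\<dots> = Y / (a v)^2" using l by simp
    finally have "l^m * Y / D \<le> Y / (a v)^2" .
    hence "c0 * (l^m * Y / D) \<le> c0 * (Y / (a v)^2)" using c00 by (rule mult_left_mono)
    thus ?thesis by simp
  qed
  finally show ?thesis by (simp add: N_def D_def Y_def c0_def)
qed


definition Pw :: "real^'n^'n \<Rightarrow> nat \<Rightarrow> real^'n \<Rightarrow> real^'n" where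
  "Pw A m w = ((\<lambda>x. A *v x) ^^ m) w"

lemma Pw_0[simp]: "Pw A 0 w = w" by (simp add: Pw_def)
lemma Pw_Suc: "Pw A (Suc m) w = A *v Pw A m w" by (simp add: Pw_def)

lemma pm_x_scale: "\<exists>c>0. pm_x A w t = c *\<^sub>R Pw A t w"
proof (induction t)
  case 0 show ?case by (intro exI[of _ 1]) simp
next
  case (Suc t)
  then obtain c where c: "c > 0" "pm_x A w t = c *\<^sub>R Pw A t w" by blast
  show ?case
  proof (cases "Pw A t w = 0")
    case True
    thus ?thesis using c by (intro exI[of _ 1]) (simp add: Pw_Suc)
  next
    case False
    have "pm_x A w (Suc t) = (1 / norm (Pw A t w)) *\<^sub>R Pw A (Suc t) w"
      using c False by (simp add: Pw_Suc matrix_vector_mult_scaleR)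
    thus ?thesis using False by (intro exI[of _ "1 / norm (Pw A t w)"]) simp
  qed
qed

lemma pm_q_eq: "pm_q A w t = (1 / norm (Pw A t w)) *\<^sub>R Pw A t w"
proof -
  obtain c where c: "c > 0" "pm_x A w t = c *\<^sub>R Pw A t w" using pm_x_scale by blast
  thus ?thesis by (cases "Pw A t w = 0") (simp_all add: pm_q_def)
qed

lemma pm_xi_eq: "pm_xi A w t = (Pw A t w \<bullet> Pw A (Suc t) w) / (norm (Pw A t w))^2"
  by (simp add: pm_xi_def pm_q_eq Pw_Suc matrix_vector_mult_scaleR power2_eq_square)

lemma ortho_inner_sum:
  fixes B :: "'a::real_inner set"
  assumes "finite B" "pairwise orthogonal B" "\<And>b. b \<in> B \<Longrightarrow> norm b = 1"
  shows "(\<Sum>b\<in>B. f b *\<^sub>R b) \<bullet> (\<Sum>b\<in>B. g b *\<^sub>R b) = (\<Sum>b\<in>B. f b * g b)"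
proof -
  have "(\<Sum>b\<in>B. f b *\<^sub>R b) \<bullet> (\<Sum>b\<in>B. g b *\<^sub>R b) = (\<Sum>b\<in>B. f b * (b \<bullet> (\<Sum>b'\<in>B. g b' *\<^sub>R b')))"
    by (simp add: inner_sum_left)
  also have "\<dots> = (\<Sum>b\<in>B. \<Sum>b'\<in>B. f b * g b' * (b \<bullet> b'))"
    by (simp add: inner_sum_right sum_distrib_left mult_ac)
  also have "\<dots> = (\<Sum>b\<in>B. f b * g b)"
  proof (intro sum.cong refl)
    fix b assume b: "b \<in> B"
    have "(\<Sum>b'\<in>B. f b * g b' * (b \<bullet> b')) = (\<Sum>b'\<in>B. if b' = b then f b * g b else 0)"
    proof (intro sum.cong refl)
      fix b' assume b': "b' \<in> B"
      show "f b * g b' * (b \<bullet> b') = (if b' = b then f b * g b else 0)"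
        using assms(2,3) b b' by (auto simp: pairwise_def orthogonal_def norm_eq_1)
    qed
    also have "\<dots> = f b * g b" using assms(1) b by simp
    finally show "(\<Sum>b'\<in>B. f b * g b' * (b \<bullet> b')) = f b * g b" .
  qed
  finally show ?thesis .
qed

locale eigbasis =
  fixes A :: "real^'n^'n" and B :: "(real^'n) set"
  assumes sym: "transpose A = A"
    and fin: "finite B" and orth: "pairwise orthogonal B" and unit: "\<And>b. b \<in> B \<Longrightarrow> norm b = 1"
    and spanB: "span B = UNIV" and eig: "\<And>b. b \<in> B \<Longrightarrow> A *v b = (b \<bullet> (A *v b)) *\<^sub>R b"
begin

definition mu where "mu b = b \<bullet> (A *v b)"

lemma expand: "x = (\<Sum>b\<in>B. (x \<bullet> b) *\<^sub>R b)"
  using orthonormal_basis_expand[OF orth unit _ fin, of x] spanB by simp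

lemma Pw_expand: "Pw A m w = (\<Sum>b\<in>B. (mu b ^ m * (w \<bullet> b)) *\<^sub>R b)"
proof (induction m)
  case 0 show ?case using expand[of w] by simp
next
  case (Suc m)
  have "Pw A (Suc m) w = A *v (\<Sum>b\<in>B. (mu b ^ m * (w \<bullet> b)) *\<^sub>R b)" by (simp add: Pw_Suc Suc)
  also have "\<dots> = (\<Sum>b\<in>B. (mu b ^ m * (w \<bullet> b)) *\<^sub>R (A *v b))"
    by (simp add: linear_sum[OF matrix_vector_mul_linear] matrix_vector_mult_scaleR o_def)
  also have "\<dots> = (\<Sum>b\<in>B. (mu b ^ Suc m * (w \<bullet> b)) *\<^sub>R b)"
    by (intro sum.cong refl) (simp add: eig[folded mu_def] mult_ac)
  finally show ?case .
qed

lemma sq_norm_expand: "(norm x)^2 = (\<Sum>b\<in>B. (x \<bullet> b)^2)"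
proof -
  have "(norm x)^2 = x \<bullet> x" by (simp add: power2_norm_eq_inner)
  also have "\<dots> = (\<Sum>b\<in>B. (x \<bullet> b) *\<^sub>R b) \<bullet> (\<Sum>b\<in>B. (x \<bullet> b) *\<^sub>R b)" using expand[of x] by simp
  also have "\<dots> = (\<Sum>b\<in>B. (x \<bullet> b)^2)"
    by (simp add: ortho_inner_sum[OF fin orth unit] power2_eq_square)
  finally show ?thesis .
qed

lemma xi_expand: "pm_xi A w t = (\<Sum>b\<in>B. mu b ^ (2*t+1) * (w \<bullet> b)^2) / (\<Sum>b\<in>B. mu b ^ (2*t) * (w \<bullet> b)^2)"
proof -
  have p1: "x^(2*t+1) = x * (x^t * x^t)" and p2: "x^(2*t) = x^t * x^t" for x :: real
    by (simp_all add: mult_2 power_add)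
  have "Pw A t w \<bullet> Pw A (Suc t) w = (\<Sum>b\<in>B. mu b ^ (2*t+1) * (w \<bullet> b)^2)"
  proof -
    have "Pw A t w \<bullet> Pw A (Suc t) w = (\<Sum>b\<in>B. (mu b ^ t * (w \<bullet> b)) * (mu b ^ Suc t * (w \<bullet> b)))"
      unfolding Pw_expand by (rule ortho_inner_sum[OF fin orth unit])
    thus ?thesis unfolding p1 by (simp add: power2_eq_square mult_ac)
  qed
  moreover have "(norm (Pw A t w))^2 = (\<Sum>b\<in>B. mu b ^ (2*t) * (w \<bullet> b)^2)"
  proof -
    have "Pw A t w \<bullet> Pw A t w = (\<Sum>b\<in>B. (mu b ^ t * (w \<bullet> b)) * (mu b ^ t * (w \<bullet> b)))"
      unfolding Pw_expand by (rule ortho_inner_sum[OF fin orth unit])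
    thus ?thesis unfolding p2 power2_norm_eq_inner by (simp add: power2_eq_square mult_ac)
  qed
  ultimately show ?thesis by (simp add: pm_xi_eq)
qed

lemma eigenvalues: "{l. \<exists>v. v \<noteq> 0 \<and> A *v v = l *\<^sub>R v} = mu ` B"
proof
  show "mu ` B \<subseteq> {l. \<exists>v. v \<noteq> 0 \<and> A *v v = l *\<^sub>R v}"
  proof
    fix l assume "l \<in> mu ` B"
    then obtain b where b: "b \<in> B" "l = mu b" by blast
    have "b \<noteq> 0" using unit[OF b(1)] by auto
    thus "l \<in> {l. \<exists>v. v \<noteq> 0 \<and> A *v v = l *\<^sub>R v}" using eig[OF b(1)] b(2) mu_def by auto
  qed
  show "{l. \<exists>v. v \<noteq> 0 \<and> A *v v = l *\<^sub>R v} \<subseteq> mu ` B"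
  proof
    fix l assume "l \<in> {l. \<exists>v. v \<noteq> 0 \<and> A *v v = l *\<^sub>R v}"
    then obtain v where v: "v \<noteq> 0" "A *v v = l *\<^sub>R v" by blast
    obtain b where b: "b \<in> B" "v \<bullet> b \<noteq> 0"
    proof (rule ccontr)
      assume "\<not> thesis"
      hence "\<forall>b\<in>B. v \<bullet> b = 0" using that by blast
      hence "v = 0" using expand[of v] by simp
      thus False using v by simp
    qed
    have "l * (v \<bullet> b) = (A *v v) \<bullet> b" using v(2) by simp
    also have "\<dots> = v \<bullet> (A *v b)" using sym_dot[OF sym, of v b] by simp
    also have "\<dots> = mu b * (v \<bullet> b)" by (subst eig[OF b(1)]) (simp add: mu_def)
    finally have "l = mu b" using b(2) by simp
    thus "l \<in> mu ` B" using b(1) by blast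
  qed
qed

lemma B_ne: "B \<noteq> {}"
proof
  assume "B = {}"
  hence "span B = {0}" by simp
  hence "axis undefined (1::real) \<in> {0::real^'n}" using spanB by simp
  thus False by (simp add: axis_eq_0_iff)
qed

lemma lambda_max_eq: "lambda_max A = Max (mu ` B)"
  by (simp add: lambda_max_def eigenvalues)

lemma mu_le: "b \<in> B \<Longrightarrow> mu b \<le> lambda_max A"
  unfolding lambda_max_eq using fin by (intro Max_ge) auto

lemma exists_top: obtains v where "v \<in> B" "mu v = lambda_max A"
proof -
  have "Max (mu ` B) \<in> mu ` B" using fin B_ne by (intro Max_in) auto
  thus ?thesis using that lambda_max_eq by auto
qed

end


locale eigpsd = eigbasis +
  assumes psd: "\<forall>x. 0 \<le> x \<bullet> (A *v x)" and nz: "A \<noteq> 0"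
begin

lemma mu_nonneg: "b \<in> B \<Longrightarrow> 0 \<le> mu b"
  using psd by (simp add: mu_def)

lemma lam_pos: "lambda_max A > 0"
proof (rule ccontr)
  assume "\<not> lambda_max A > 0"
  hence mu0: "b \<in> B \<Longrightarrow> mu b = 0" for b using mu_le[of b] mu_nonneg[of b] by linarith
  have "A *v x = 0 *v x" for x
  proof -
    have "A *v x = A *v (\<Sum>b\<in>B. (x \<bullet> b) *\<^sub>R b)" using expand[of x] by simp
    also have "\<dots> = (\<Sum>b\<in>B. (x \<bullet> b) *\<^sub>R (A *v b))"
      by (simp add: linear_sum[OF matrix_vector_mul_linear] matrix_vector_mult_scaleR o_def)
    also have "\<dots> = 0" by (intro sum.neutral ballI) (simp add: eig[folded mu_def] mu0)
    finally show ?thesis by simp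
  qed
  hence "A = 0" by (simp add: matrix_eq)
  thus False using nz by simp
qed

lemma xi_bounds: "0 \<le> pm_xi A w t \<and> pm_xi A w t \<le> lambda_max A"
proof -
  let ?N = "\<Sum>b\<in>B. mu b ^ (2*t+1) * (w \<bullet> b)^2"
  let ?D = "\<Sum>b\<in>B. mu b ^ (2*t) * (w \<bullet> b)^2"
  have tn: "b \<in> B \<Longrightarrow> 0 \<le> mu b ^ k * (w \<bullet> b)^2" for b k
    using mu_nonneg[of b] by simp
  have N0: "?N \<ge> 0" by (intro sum_nonneg tn)
  have D0: "?D \<ge> 0" by (intro sum_nonneg tn)
  have ND: "?N \<le> lambda_max A * ?D"
    unfolding sum_distrib_left
  proof (intro sum_mono)
    fix b assume b: "b \<in> B"
    have "mu b ^ (2*t+1) * (w \<bullet> b)^2 = mu b * (mu b ^ (2*t) * (w \<bullet> b)^2)" by simp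
    also have "\<dots> \<le> lambda_max A * (mu b ^ (2*t) * (w \<bullet> b)^2)"
      using mu_le[OF b] mu_nonneg[OF b] by (intro mult_right_mono) auto
    finally show "mu b ^ (2*t+1) * (w \<bullet> b)^2 \<le> lambda_max A * (mu b ^ (2*t) * (w \<bullet> b)^2)" .
  qed
  show ?thesis
  proof (cases "?D = 0")
    case True thus ?thesis using lam_pos by (simp add: xi_expand)
  next
    case False
    hence "?D > 0" using D0 by simp
    thus ?thesis using N0 ND by (simp add: xi_expand divide_le_eq)
  qed
qed

lemma err_bounds: "0 \<le> pm_err A w t \<and> pm_err A w t \<le> 1"
  using xi_bounds[of w t] lam_pos by (simp add: pm_err_def divide_le_eq)

lemma err_pointwise:
  assumes v: "v \<in> B" "mu v = lambda_max A" and wv: "w \<bullet> v \<noteq> 0" and t: "t \<ge> 1"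
    and d: "1 / (real (2*t) + 1) \<le> d" "d \<le> 1"
  shows "pm_err A w t \<le> d + d * (1 - d)^(2*t) * ((norm w)^2 - (w \<bullet> v)^2) / (w \<bullet> v)^2"
proof -
  have "pm_err A w t = (lambda_max A - (\<Sum>b\<in>B. mu b ^ (2*t+1) * (w \<bullet> b)^2) / (\<Sum>b\<in>B. mu b ^ (2*t) * (w \<bullet> b)^2)) / lambda_max A"
    by (simp add: pm_err_def xi_expand)
  also have "\<dots> \<le> d + d * (1 - d)^(2*t) * (\<Sum>b\<in>B-{v}. (w \<bullet> b)^2) / (w \<bullet> v)^2"
    by (rule err_bound_abstract[where B=B and v=v and l="lambda_max A" and mu=mu and a="\<lambda>b. w \<bullet> b" and m="2*t" and d=d])
       (use fin v lam_pos wv d mu_le mu_nonneg t in auto)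
  also have "(\<Sum>b\<in>B-{v}. (w \<bullet> b)^2) = (norm w)^2 - (w \<bullet> v)^2"
    using sq_norm_expand[of w] sum.remove[OF fin v(1), of "\<lambda>b. (w \<bullet> b)^2"] by simp
  finally show ?thesis .
qed

end


lemma min_trick:
  fixes d q e :: real
  assumes "0 \<le> q" "0 < 1 - d" "e \<le> 1" "e \<le> d + q"
  shows "e \<le> d + 2 * (1 - d) * q / ((1 - d) + q)"
proof (cases "q \<ge> 1 - d")
  case True
  have "(1 - d) * (1 - d) \<le> (1 - d) * q" using True assms by (intro mult_left_mono) auto
  hence "(1 - d) * ((1 - d) + q) \<le> 2 * (1 - d) * q" by (simp add: algebra_simps)
  hence "1 - d \<le> 2 * (1 - d) * q / ((1 - d) + q)" using assms by (simp add: le_divide_eq)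
  thus ?thesis using assms by linarith
next
  case False
  have "q * q \<le> q * (1 - d)" using False assms by (intro mult_left_mono) auto
  hence "q * ((1 - d) + q) \<le> 2 * (1 - d) * q" by (simp add: algebra_simps)
  hence "q \<le> 2 * (1 - d) * q / ((1 - d) + q)" using assms by (simp add: le_divide_eq)
  thus ?thesis using assms by linarith
qed

context eigpsd begin

lemma err_H:
  assumes v: "v \<in> B" "mu v = lambda_max A" and w: "w \<noteq> 0" and t: "t \<ge> 1"
    and d: "1 / (real (2*t) + 1) \<le> d" "d < 1"
  shows "pm_err A w t \<le> d + Hf (1 - d) (d * (1 - d)^(2*t)) (w \<bullet> v) ((norm w)^2 - (w \<bullet> v)^2)"
proof -
  define c where "c = d * (1 - d)^(2*t)"
  have d0: "d > 0" using d(1) by (metis less_le_trans divide_pos_pos zero_less_one of_nat_0_le_iff add_nonneg_pos)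
  have c0: "c > 0" using d0 d by (simp add: c_def)
  define Y where "Y = (norm w)^2 - (w \<bullet> v)^2"
  have nv: "norm v = 1" using unit v(1) by simp
  have Y0: "Y \<ge> 0"
  proof -
    have "\<bar>w \<bullet> v\<bar> \<le> norm w" using Cauchy_Schwarz_ineq2[of w v] nv by simp
    hence "(w \<bullet> v)^2 \<le> (norm w)^2" by (metis abs_le_square_iff abs_norm_cancel)
    thus ?thesis by (simp add: Y_def)
  qed
  have e1: "pm_err A w t \<le> 1" using err_bounds by blast
  show ?thesis
  proof (cases "w \<bullet> v = 0")
    case True
    hence "Y = (norm w)^2" by (simp add: Y_def)
    hence Yp: "Y > 0" using w by simp
    have "Hf (1 - d) c (w \<bullet> v) Y = 2 * (1 - d)" using True Yp c0 by (simp add: Hf_def)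
    thus ?thesis using e1 d by (simp add: c_def Y_def)
  next
    case False
    define q where "q = c * Y / (w \<bullet> v)^2"
    have q0: "q \<ge> 0" using c0 Y0 by (simp add: q_def)
    have "pm_err A w t \<le> d + q"
      using err_pointwise[OF v False t d(1) less_imp_le[OF d(2)]] by (simp add: q_def c_def Y_def)
    hence "pm_err A w t \<le> d + 2 * (1 - d) * q / ((1 - d) + q)"
      using min_trick[OF q0 _ e1] d by simp
    also have "2 * (1 - d) * q / ((1 - d) + q) = Hf (1 - d) c (w \<bullet> v) Y"
    proof -
      let ?y = "(w \<bullet> v)^2"
      have y: "?y > 0" using False by simp
      have "2 * (1 - d) * q / ((1 - d) + q) = (2 * (1 - d) * q * ?y) / (((1 - d) + q) * ?y)"
        using y by simp
      also have "2 * (1 - d) * q * ?y = 2 * (1 - d) * c * Y" using y by (simp add: q_def)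
      also have "((1 - d) + q) * ?y = (1 - d) * ?y + c * Y" using y by (simp add: q_def algebra_simps)
      finally show ?thesis by (simp add: Hf_def)
    qed
    finally show ?thesis by (simp add: c_def Y_def)
  qed
qed

end


lemma mv_meas[measurable]: "(\<lambda>x. (A::real^'n^'n) *v x) \<in> borel_measurable borel"
  by (intro borel_measurable_continuous_onI linear_continuous_on
      linear_conv_bounded_linear[THEN iffD1] matrix_vector_mul_linear)

lemma pm_x_meas[measurable]: "(\<lambda>w. pm_x A w t) \<in> borel_measurable borel"
proof (induction t)
  case 0 show ?case by simp
next
  case (Suc t)
  note [measurable] = Suc
  have "(\<lambda>w. (1 / norm (pm_x A w t)) *\<^sub>R pm_x A w t) \<in> borel_measurable borel" by measurable
  hence "(\<lambda>w. A *v ((1 / norm (pm_x A w t)) *\<^sub>R pm_x A w t)) \<in> borel_measurable borel"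
    by (rule measurable_compose) (rule mv_meas)
  thus ?case by simp
qed

lemma pm_err_meas[measurable]: "(\<lambda>w. pm_err A w t) \<in> borel_measurable borel"
proof -
  have [measurable]: "(\<lambda>w. pm_q A w t) \<in> borel_measurable borel"
    unfolding pm_q_def by measurable
  have [measurable]: "(\<lambda>w. A *v pm_q A w t) \<in> borel_measurable borel"
    by (rule measurable_compose[OF _ mv_meas]) measurable
  show ?thesis unfolding pm_err_def pm_xi_def by measurable
qed

lemma exp_bound:
  fixes d :: real and t :: nat assumes "0 \<le> d" "d \<le> 1"
  shows "(1 - d)^(2*t) \<le> exp (- (2 * real t * d))"
proof -
  have "(1 - d)^(2*t) \<le> (exp (- d))^(2*t)"
    using assms exp_ge_add_one_self[of "-d"] by (intro power_mono) auto
  also have "\<dots> = exp (real (2*t) * (- d))" by (rule exp_of_nat_mult[symmetric])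
  finally show ?thesis by simp
qed

theorem theorem3p4:
  fixes A :: "real^'n^'n"
  assumes sym: "transpose A = A"
    and psd: "\<forall>x. 0 \<le> x \<bullet> (A *v x)"
    and nz: "A \<noteq> 0"
  shows "(\<forall>t::nat. t \<ge> 1 \<longrightarrow>
           integrable std_gaussian_vec (\<lambda>w. pm_err A w t) \<and>
           (\<integral>w. pm_err A w t \<partial>std_gaussian_vec)
             \<le> (1 + ln (sqrt (2 * real CARD('n))) + ln (real t)) / real t) \<and>
         (\<forall>(\<epsilon>::real) (t::nat). 0 < \<epsilon> \<and> \<epsilon> < 1 \<and> t \<ge> 1 \<and>
           real t \<ge> (1 + ln (sqrt (2 * real CARD('n))) + ln (real t)) / \<epsilon> \<longrightarrow>
           (\<integral>w. pm_err A w t \<partial>std_gaussian_vec) \<le> \<epsilon>)"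
proof -
  interpret P: prob_space "std_gaussian_vec :: (real^'n) measure" by (rule prob_space_std)
  obtain B where B: "finite B" "pairwise orthogonal B" "\<forall>b\<in>B. norm b = 1" "span B = (UNIV :: (real^'n) set)"
    "\<forall>b\<in>B. A *v b = (b \<bullet> (A *v b)) *\<^sub>R b"
    using spectral_subspace[OF sym, of UNIV] by auto
  interpret E: eigpsd A B
    by unfold_locales (use B sym psd nz in auto)
  obtain v where v: "v \<in> B" "E.mu v = lambda_max A" using E.exists_top by blast
  have nv: "norm v = 1" using B(3) v(1) by simp
  define n where "n = real CARD('n)"
  have n1: "n \<ge> 1" by (simp add: n_def)
  have bnd: "0 \<le> pm_err A w t \<and> pm_err A w t \<le> 1" for w t using E.err_bounds .
  have intg: "integrable std_gaussian_vec (\<lambda>w. pm_err A w t)" for t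
    by (rule P.integrable_const_bound[where B=1]) (use bnd in \<open>auto simp: std_gaussian_vec_alt\<close>)
  have int_le1: "(\<integral>w. pm_err A w t \<partial>std_gaussian_vec) \<le> 1" for t
  proof -
    have "(\<integral>w. pm_err A w t \<partial>std_gaussian_vec) \<le> (\<integral>w. 1 \<partial>(std_gaussian_vec :: (real^'n) measure))"
      by (rule integral_mono') (use bnd in auto)
    thus ?thesis using P.prob_space by simp
  qed
  have main: "(\<integral>w. pm_err A w t \<partial>std_gaussian_vec) \<le> (1 + ln (sqrt (2 * n)) + ln (real t)) / real t"
    if t: "t \<ge> 1" for t
  proof -
    define L where "L = ln (sqrt (2 * n)) + ln (real t)"
    have tpos: "real t > 0" using t by simp
    have Ls0: "ln (sqrt (2 * n)) \<ge> 0" using n1 by simp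
    have Lt0: "ln (real t) \<ge> 0" using t by simp
    show ?thesis
    proof (cases "(1 + L) / real t \<ge> 1")
      case True thus ?thesis using int_le1[of t] by (simp add: L_def add.assoc)
    next
      case False
      hence lt: "1 + L < real t" using tpos by (simp add: field_simps)
      have t2: "t \<ge> 2"
      proof (rule ccontr)
        assume "\<not> t \<ge> 2" hence "t = 1" using t by simp
        thus False using lt Ls0 by (simp add: L_def)
      qed
      define d where "d = L / real t"
      have d1: "d < 1" using lt tpos by (simp add: d_def field_simps)
      have lnt: "ln (real t) \<ge> 1 / 2"
      proof -
        have "ln (1 / real t) \<le> 1 / real t - 1" using tpos by (intro ln_le_minus_one) simp
        hence "ln (real t) \<ge> 1 - 1 / real t" using tpos by (simp add: ln_div)
        moreover have "1 / real t \<le> 1 / 2" using t2 by (simp add: field_simps)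
        ultimately show ?thesis by linarith
      qed
      have Lh: "L \<ge> 1/2" using lnt Ls0 by (simp add: L_def)
      have d0: "d > 0" using Lh tpos by (simp add: d_def)
      have dlow: "1 / (real (2*t) + 1) \<le> d"
      proof -
        have "1 / (real (2*t) + 1) \<le> 1 / (2 * real t)" using tpos by (simp add: field_simps)
        also have "\<dots> = (1/2) / real t" by simp
        also have "\<dots> \<le> L / real t" using Lh tpos by (intro divide_right_mono) auto
        finally show ?thesis by (simp add: d_def)
      qed
      define a where "a = 1 - d"
      define c where "c = d * (1 - d)^(2*t)"
      have a0: "a > 0" using d1 by (simp add: a_def)
      have c0: "c \<ge> 0" using d0 d1 by (simp add: c_def)
      define h where "h w = Hf a c (w \<bullet> v) ((norm w)^2 - (w \<bullet> v)^2)" for w :: "real^'n"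
      have h_meas[measurable]: "h \<in> borel_measurable borel" unfolding h_def Hf_def by measurable
      have h0: "h w \<ge> 0" for w
      proof -
        have "\<bar>w \<bullet> v\<bar> \<le> norm w" using Cauchy_Schwarz_ineq2[of w v] nv by simp
        hence "(w \<bullet> v)^2 \<le> (norm w)^2" by (metis abs_le_square_iff abs_norm_cancel)
        thus ?thesis unfolding h_def using a0 c0 by (intro Hf_nonneg) auto
      qed
      have ptw: "w \<noteq> 0 \<Longrightarrow> pm_err A w t \<le> d + h w" for w
        using E.err_H[OF v _ t dlow d1, of w] by (simp add: h_def a_def c_def)
      fix k :: 'n
      obtain T where T: "orthogonal_transformation T" "T (norm v *\<^sub>R axis k (1::real)) = v"
        using rotation_rightward_line[of v k] by blast
      define e :: "real^'n" where "e = axis k 1"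
      have Te: "T e = v" using T(2) nv by (simp add: e_def)
      have eB: "e \<in> Basis" by (simp add: e_def)
      have hT: "h (T x) = Hf a c (x \<bullet> e) (\<Sum>b\<in>Basis-{e}. (x \<bullet> b)^2)" for x
      proof -
        have "T x \<bullet> T e = x \<bullet> e" using T(1) unfolding orthogonal_transformation_def by blast
        hence "T x \<bullet> v = x \<bullet> e" using Te by simp
        moreover have "norm (T x) = norm x" using T(1) by (simp add: orthogonal_transformation_norm)
        moreover have "(norm x)^2 - (x \<bullet> e)^2 = (\<Sum>b\<in>Basis-{e}. (x \<bullet> b)^2)"
          using sum_Basis_sq[of x] sum.remove[OF finite_Basis eB, of "\<lambda>b. (x \<bullet> b)^2"] by simp
        ultimately show ?thesis by (simp add: h_def)
      qed
      have "(\<integral>\<^sup>+w. h w \<partial>std_gaussian_vec) = (\<integral>\<^sup>+w. h (T w) \<partial>std_gaussian_vec)"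
        by (rule nn_integral_std_rotate[OF T(1), symmetric]) measurable
      also have "\<dots> = (\<integral>\<^sup>+w. ennreal (Hf a c (w \<bullet> e) (\<Sum>b\<in>Basis-{e}. (w \<bullet> b)^2)) \<partial>std_gaussian_vec)"
        by (simp add: hT)
      also have "\<dots> \<le> ennreal (sqrt (2*pi) * sqrt (a * c * CARD('n)))"
        by (rule gauss_split[OF eB less_imp_le[OF a0] c0])
      finally have hint: "(\<integral>\<^sup>+w. h w \<partial>std_gaussian_vec) \<le> ennreal (sqrt (2*pi) * sqrt (a * c * n))"
        by (simp add: n_def)
      have numb: "sqrt (2*pi) * sqrt (a * c * n) \<le> 1 / real t"
      proof -
        have "exp (- (2 * real t * d)) = 1 / (2 * n * (real t)^2)"
        proof -
          have "2 * real t * d = 2 * L" using tpos by (simp add: d_def)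
          hence "exp (2 * real t * d) = exp (L + L)" by simp
          also have "\<dots> = (exp L)^2" by (simp only: exp_add power2_eq_square)
          also have "exp L = sqrt (2 * n) * real t" using n1 tpos by (simp add: L_def exp_add)
          also have "(sqrt (2 * n) * real t)^2 = 2 * n * (real t)^2" using n1 by (simp add: power_mult_distrib)
          finally show ?thesis by (simp add: exp_minus field_simps)
        qed
        hence "(1 - d)^(2*t) \<le> 1 / (2 * n * (real t)^2)"
          using exp_bound[of d t] d0 d1 by simp
        hence "a * d * (1 - d)^(2*t) \<le> a * d * (1 / (2 * n * (real t)^2))"
          by (rule mult_left_mono) (use a0 d0 in simp)
        hence "a * d * (1 - d)^(2*t) * n \<le> a * d * (1 / (2 * n * (real t)^2)) * n"
          by (rule mult_right_mono) (use n1 in simp)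
        hence "a * c * n \<le> a * d * (1 / (2 * n * (real t)^2)) * n"
          unfolding c_def by (simp add: mult.assoc)
        also have "\<dots> = (a * d) / (2 * (real t)^2)" using n1 by (simp add: field_simps)
        also have "\<dots> \<le> (1/4) / (2 * (real t)^2)"
        proof (intro divide_right_mono)
          have "0 \<le> (d - 1/2)^2" by simp
          thus "a * d \<le> 1/4" by (simp add: a_def power2_eq_square algebra_simps)
        qed simp
        finally have acn: "a * c * n \<le> 1 / (8 * (real t)^2)" by simp
        have "(sqrt (2*pi) * sqrt (a * c * n))^2 = 2 * pi * (a * c * n)"
          using a0 c0 n1 by (simp add: power_mult_distrib)
        also have "\<dots> \<le> 2 * pi * (1 / (8 * (real t)^2))" using acn by (intro mult_left_mono) auto
        also have "\<dots> \<le> 2 * 4 * (1 / (8 * (real t)^2))" using pi_less_4 by (intro mult_right_mono) auto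
        also have "\<dots> = (1 / real t)^2" using tpos by (simp add: power2_eq_square)
        finally show ?thesis by (rule power2_le_imp_le) (use tpos in simp)
      qed
      have "(\<integral>\<^sup>+w. ennreal (pm_err A w t) \<partial>std_gaussian_vec) \<le> (\<integral>\<^sup>+w. ennreal d + h w \<partial>std_gaussian_vec)"
      proof (rule nn_integral_mono_AE)
        have "AE w in std_gaussian_vec. w \<noteq> 0"
          unfolding std_gaussian_vec_alt by (subst AE_density) (auto intro: AE_mp[OF AE_lborel_singleton])
        thus "AE w in std_gaussian_vec. ennreal (pm_err A w t) \<le> ennreal d + h w"
        proof eventually_elim
          case (elim w)
          have "pm_err A w t \<le> d + h w" by (rule ptw[OF elim])
          thus ?case using d0 h0[of w] by (simp add: ennreal_plus[symmetric] del: ennreal_plus)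
        qed
      qed
      also have "\<dots> = ennreal d + (\<integral>\<^sup>+w. h w \<partial>std_gaussian_vec)"
      proof -
        have e1: "emeasure (std_gaussian_vec :: (real^'n) measure) UNIV = 1" using P.emeasure_space_1 by simp
        have "(\<integral>\<^sup>+w. ennreal d + h w \<partial>std_gaussian_vec) = (\<integral>\<^sup>+w. ennreal d \<partial>(std_gaussian_vec :: (real^'n) measure)) + (\<integral>\<^sup>+w. h w \<partial>std_gaussian_vec)"
          by (rule nn_integral_add) (auto simp: std_gaussian_vec_alt)
        moreover have "(\<integral>\<^sup>+w. ennreal d \<partial>(std_gaussian_vec :: (real^'n) measure)) = ennreal d"
          using e1 by simp
        ultimately show ?thesis by simp
      qed
      also have "\<dots> \<le> ennreal d + ennreal (1 / real t)"
        by (intro add_left_mono order_trans[OF hint] ennreal_leI numb)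
      also have "\<dots> = ennreal (d + 1 / real t)" using d0 tpos by simp
      finally have nn: "(\<integral>\<^sup>+w. ennreal (pm_err A w t) \<partial>std_gaussian_vec) \<le> ennreal (d + 1 / real t)" .
      have "(\<integral>w. pm_err A w t \<partial>std_gaussian_vec) = enn2real (\<integral>\<^sup>+w. ennreal (pm_err A w t) \<partial>std_gaussian_vec)"
        by (rule integral_eq_nn_integral) (use bnd in \<open>auto simp: std_gaussian_vec_alt\<close>)
      also have "\<dots> \<le> d + 1 / real t"
        using nn d0 tpos by (simp add: enn2real_leI)
      also have "\<dots> = (1 + ln (sqrt (2 * n)) + ln (real t)) / real t"
        using tpos by (simp add: d_def L_def field_simps)
      finally show ?thesis .
    qed
  qed
  show ?thesis
  proof (intro conjI allI impI)
    fix t :: nat assume t: "t \<ge> 1"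
    show "integrable std_gaussian_vec (\<lambda>w. pm_err A w t)" by (rule intg)
    show "(\<integral>w. pm_err A w t \<partial>std_gaussian_vec) \<le> (1 + ln (sqrt (2 * real CARD('n))) + ln (real t)) / real t"
      using main[OF t] by (simp add: n_def)
  next
    fix \<epsilon> :: real and t :: nat
    assume h: "0 < \<epsilon> \<and> \<epsilon> < 1 \<and> t \<ge> 1 \<and> real t \<ge> (1 + ln (sqrt (2 * real CARD('n))) + ln (real t)) / \<epsilon>"
    hence t: "t \<ge> 1" and e: "\<epsilon> > 0" by auto
    have tpos: "real t > 0" using t by simp
    have "(1 + ln (sqrt (2 * real CARD('n))) + ln (real t)) \<le> \<epsilon> * real t"
      using h e by (simp add: divide_le_eq mult.commute)
    hence "(1 + ln (sqrt (2 * real CARD('n))) + ln (real t)) / real t \<le> \<epsilon>"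
      using tpos by (simp add: divide_le_eq)
    thus "(\<integral>w. pm_err A w t \<partial>std_gaussian_vec) \<le> \<epsilon>"
      using main[OF t] by (simp add: n_def)
  qed
qed


end
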